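(* Consider the following kinetic transport model. Let $\{Z_k\}_{k\ge1}$ be a Markov chain on the two states $\{\mathrm{F},\mathrm{A}\}$ with initial distribution $\lambda=(\lambda_{\mathrm F},\lambda_{\mathrm A})$ and transition matrix $$\begin{pmatrix}1-a & a\\ b & 1-b\end{pmatrix}$$ (rows and columns indexed by $\mathrm F,\mathrm A$), $a,b\in[0,1]$. Let $K_n=\sum_{k=1}^n \mathbf 1_{\{Z_k=\mathrm F\}}$ and $f_n(k)=P(K_n=k)$. Independently of $\{Z_k\}$, let $(X_k,Y_k)_{k\ge1}$ be i.i.d. with $$P((X_k,Y_k)=(1,j))=\alpha,\qquad P((X_k,Y_k)=(-1,j))=\beta\qquad (j=\pm1),$$ where $\alpha,\beta\ge0$, $\alpha+\beta=1/2$. Let $\tilde S(n)=(\tilde S_X(n),\tilde S_Y(n))=\sum_{k=1}^{K_n}(X_k+1,Y_k)$. Then for $n\ge1$, $0\le x\le n$ and $-n\le y\le n$, $$P(\tilde S(n)=(2x,y))=\sum_{k=x}^n f_n(k)\binom{k}{x}\binom{k}{\frac{k+y}{2}}\alpha^x\beta^{k-x},$$ and (whenever $P(\tilde S_X(n)=2x)>0$) $$\operatorname{Var}(\tilde S_Y(n)\mid \tilde S_X(n)=2x)=\frac{\sum_{k=x}^n k\,f_n(k)\binom{k}{x}(2\alpha)^x(2\beta)^{k-x}}{\sum_{k=x}^n f_n(k)\binom{k}{x}(2\alpha)^x(2\beta)^{k-x}}.$$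
   Context: The binomial coefficient $\binom{k}{m}$ is taken to be $0$ when $m$ is not an integer in $\{0,\dots,k\}$ (so only $k\equiv y \pmod 2$ contribute in the first formula). *)

theory Defs
  imports "HOL-Probability.Probability"
begin

datatype state = F | A

definition mc_step :: "real \<Rightarrow> real \<Rightarrow> state \<Rightarrow> state pmf" where
  "mc_step a b s = (case s of
      F \<Rightarrow> map_pmf (\<lambda>c. if c then A else F) (bernoulli_pmf a)
    | A \<Rightarrow> map_pmf (\<lambda>c. if c then F else A) (bernoulli_pmf b))"

fun mc_path :: "real \<Rightarrow> real \<Rightarrow> real \<Rightarrow> nat \<Rightarrow> state list pmf" where
  "mc_path lamF a b 0 = return_pmf []"
| "mc_path lamF a b (Suc n) = do {
     zs \<leftarrow> mc_path lamF a b n;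
     z \<leftarrow> (if zs = [] then map_pmf (\<lambda>c. if c then F else A) (bernoulli_pmf lamF)
           else mc_step a b (last zs));
     return_pmf (zs @ [z]) }"

definition K_count :: "state list \<Rightarrow> nat" where
  "K_count zs = length (filter (\<lambda>z. z = F) zs)"

definition joint :: "real \<Rightarrow> real \<Rightarrow> real \<Rightarrow> (int \<times> int) pmf \<Rightarrow> nat
    \<Rightarrow> (state list \<times> (int \<times> int) list) pmf" where
  "joint lamF a b step n = pair_pmf (mc_path lamF a b n) (replicate_pmf n step)"

definition S_tilde :: "state list \<times> (int \<times> int) list \<Rightarrow> int \<times> int" where
  "S_tilde \<omega> = (let K = K_count (fst \<omega>); ws = take K (snd \<omega>) in
      (\<Sum>(x,y)\<leftarrow>ws. x + 1, \<Sum>(x,y)\<leftarrow>ws. y))"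

definition gbinom :: "nat \<Rightarrow> real \<Rightarrow> real" where
  "gbinom k m = (if m \<in> \<int> \<and> 0 \<le> m \<and> m \<le> real k then real (k choose nat \<lfloor>m\<rfloor>) else 0)"

end

theory Submission
  imports Defs
begin

definition phi :: "bool \<times> bool \<Rightarrow> int \<times> int" where
  "phi = (\<lambda>(u,v). (if u then 1 else -1, if v then 1 else -1))"

lemma inj_phi: "inj phi"
  unfolding phi_def inj_def by auto

lemma step_eq:
  fixes \<alpha> \<beta> :: real and step :: "(int \<times> int) pmf"
  assumes "0 \<le> \<alpha>" "0 \<le> \<beta>" "\<alpha> + \<beta> = 1/2"
    and "pmf step (1, 1) = \<alpha>" "pmf step (1, -1) = \<alpha>"
    and "pmf step (-1, 1) = \<beta>" "pmf step (-1, -1) = \<beta>"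
  shows "step = map_pmf phi (pair_pmf (bernoulli_pmf (2*\<alpha>)) (bernoulli_pmf (1/2)))"
proof (rule pmf_eqI)
  fix z :: "int \<times> int"
  let ?S = "{(1,1),(1,-1),(-1,1),(-1,-1)} :: (int \<times> int) set"
  have a1: "2*\<alpha> \<le> 1" using assms by linarith
  show "pmf step z = pmf (map_pmf phi (pair_pmf (bernoulli_pmf (2*\<alpha>)) (bernoulli_pmf (1/2)))) z"
  proof (cases "z \<in> range phi")
    case True
    then obtain w where w: "z = phi w" by auto
    show ?thesis unfolding w pmf_map_inj'[OF inj_phi]
      using assms a1 by (cases w) (auto simp: phi_def pmf_pair)
  next
    case False
    have zS: "z \<notin> ?S" using False unfolding phi_def
      by (auto simp: image_def) (metis (full_types))+
    have "measure_pmf.prob step (insert z ?S) \<le> 1" by (rule measure_pmf.prob_le_1)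
    moreover have "measure_pmf.prob step (insert z ?S) = pmf step z + 1"
      using zS assms by (subst measure_measure_pmf_finite) auto
    ultimately have "pmf step z = 0" using pmf_nonneg[of step z] by linarith
    then show ?thesis using False by (auto intro!: pmf_map_outside)
  qed
qed


definition gS :: "(int \<times> int) list \<Rightarrow> int \<times> int" where
  "gS ws = (\<Sum>(x,y)\<leftarrow>ws. x + 1, \<Sum>(x,y)\<leftarrow>ws. y)"

definition psi :: "nat \<Rightarrow> nat \<times> nat \<Rightarrow> int \<times> int" where
  "psi k = (\<lambda>(i,j). (2 * int i, 2 * int j - int k))"

lemma bind_map_pair: "M1 \<bind> (\<lambda>a. map_pmf (f a) M2) = map_pmf (\<lambda>(a,b). f a b) (pair_pmf M1 M2)"
  unfolding pair_pmf_def map_pmf_def by (simp add: bind_assoc_pmf bind_return_pmf)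

lemma pair_swap4:
  fixes M1 :: "'a pmf" and M2 :: "'b pmf" and M3 :: "'c pmf" and M4 :: "'d pmf"
  shows   "pair_pmf (pair_pmf M1 M3) (pair_pmf M2 M4) =
   map_pmf (\<lambda>((a,b),(c,d)). ((a,c),(b,d))) (pair_pmf (pair_pmf M1 M2) (pair_pmf M3 M4))"
proof (rule pmf_eqI)
  fix z :: "('a \<times> 'c) \<times> ('b \<times> 'd)"
  obtain a c b d where z: "z = ((a,c),(b,d))" by (metis prod.collapse)
  have inj: "inj (\<lambda>((a::'a,b::'b),(c::'c,d::'d)). ((a,c),(b,d)))"
    unfolding inj_def by auto
  have "z = (\<lambda>((a,b),(c,d)). ((a,c),(b,d))) ((a,b),(c,d))" using z by simp
  then show "pmf (pair_pmf (pair_pmf M1 M3) (pair_pmf M2 M4)) z =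
    pmf (map_pmf (\<lambda>((a,b),(c,d)). ((a,c),(b,d))) (pair_pmf (pair_pmf M1 M2) (pair_pmf M3 M4))) z"
    by (simp only: pmf_map_inj'[OF inj]) (simp add: z pmf_pair)
qed

lemma gS_Cons: "gS (w # ws) = (fst w + 1 + fst (gS ws), snd w + snd (gS ws))"
  by (cases w) (simp add: gS_def)

lemma D_eq:
  assumes p: "0 \<le> p" "p \<le> 1"
  shows "map_pmf gS (replicate_pmf k (map_pmf phi (pair_pmf (bernoulli_pmf p) (bernoulli_pmf (1/2))))) =
         map_pmf (psi k) (pair_pmf (binomial_pmf k p) (binomial_pmf k (1/2)))"
proof (induction k)
  case 0
  then show ?case using p by (simp add: binomial_pmf_0 gS_def psi_def)
next
  case (Suc k)
  let ?B1 = "bernoulli_pmf p" and ?B2 = "bernoulli_pmf (1/2::real)"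
  let ?X = "map_pmf phi (pair_pmf ?B1 ?B2)"
  let ?h = "\<lambda>w st. (fst w + 1 + fst st, snd w + snd (st::int\<times>int))"
  have "map_pmf gS (replicate_pmf (Suc k) ?X) =
        ?X \<bind> (\<lambda>w. map_pmf (\<lambda>ws. gS (w#ws)) (replicate_pmf k ?X))"
    by (simp add: map_bind_pmf map_pmf_def[symmetric] bind_return_pmf' map_pmf_comp o_def)
  also have "\<dots> = ?X \<bind> (\<lambda>w. map_pmf (?h w) (map_pmf gS (replicate_pmf k ?X)))"
    by (simp add: map_pmf_comp gS_Cons o_def)
  also have "\<dots> = ?X \<bind> (\<lambda>w. map_pmf (?h w) (map_pmf (psi k) (pair_pmf (binomial_pmf k p) (binomial_pmf k (1/2)))))"
    by (simp only: Suc.IH)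
  also have "\<dots> = map_pmf (\<lambda>(z,q). ?h (phi z) (psi k q))
       (pair_pmf (pair_pmf ?B1 ?B2) (pair_pmf (binomial_pmf k p) (binomial_pmf k (1/2))))"
    apply (simp only: bind_map_pmf map_pmf_comp bind_map_pair pair_map_pmf1)
    apply (rule map_pmf_cong[OF refl])
    apply (simp add: split_beta)
    done
  finally have L: "map_pmf gS (replicate_pmf (Suc k) ?X) = \<dots>" .
  have b1: "binomial_pmf (Suc k) p = map_pmf (\<lambda>(u,i). (if u then 1 else 0) + i) (pair_pmf ?B1 (binomial_pmf k p))"
    using p by (simp add: binomial_pmf_Suc map_pmf_def[symmetric] bind_map_pair)
  have b2: "binomial_pmf (Suc k) (1/2) = map_pmf (\<lambda>(u,i). (if u then 1 else 0) + i) (pair_pmf ?B2 (binomial_pmf k (1/2)))"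
    by (simp add: binomial_pmf_Suc map_pmf_def[symmetric] bind_map_pair)
  have "map_pmf (psi (Suc k)) (pair_pmf (binomial_pmf (Suc k) p) (binomial_pmf (Suc k) (1/2))) =
     map_pmf (\<lambda>((u,i),(v,j)). psi (Suc k) ((if u then 1 else 0) + i, (if v then 1 else 0) + j))
       (pair_pmf (pair_pmf ?B1 (binomial_pmf k p)) (pair_pmf ?B2 (binomial_pmf k (1/2))))"
    apply (simp only: b1 b2)
    apply (subst map_pair[symmetric])
    apply (simp only: map_pmf_comp)
    apply (rule map_pmf_cong[OF refl])
    apply (simp add: split_beta)
    done
  also have "\<dots> = map_pmf (\<lambda>(z,q). ?h (phi z) (psi k q))
       (pair_pmf (pair_pmf ?B1 ?B2) (pair_pmf (binomial_pmf k p) (binomial_pmf k (1/2))))"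
    apply (subst pair_swap4)
    apply (simp only: map_pmf_comp)
    apply (rule map_pmf_cong[OF refl])
    apply (simp add: split_beta psi_def phi_def)
    done
  finally show ?case using L by simp
qed


lemma map_take_replicate:
  "k \<le> n \<Longrightarrow> map_pmf (take k) (replicate_pmf n p) = replicate_pmf k p"
proof (induction n arbitrary: k)
  case 0 then show ?case by simp
next
  case (Suc n)
  show ?case
  proof (cases k)
    case 0 then show ?thesis by simp
  next
    case (Suc k')
    with Suc.prems have "k' \<le> n" by simp
    then show ?thesis using Suc.IH[of k'] Suc
      by (simp add: map_bind_pmf map_pmf_def[symmetric] map_pmf_comp o_def)
         (metis (no_types) map_pmf_comp o_def)
  qed
qed

lemma set_mc_path: "set_pmf (mc_path lamF a b n) \<subseteq> {zs. length zs = n}"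
  by (induction n) (auto)

lemma K_count_le: "K_count zs \<le> length zs"
  unfolding K_count_def by (rule length_filter_le)

lemma S_tilde_eq: "S_tilde \<omega> = gS (take (K_count (fst \<omega>)) (snd \<omega>))"
  unfolding S_tilde_def gS_def Let_def by simp

lemma R_eq:
  assumes "\<And>zs. zs \<in> set_pmf M \<Longrightarrow> K_count zs \<le> n"
  shows "map_pmf (\<lambda>\<omega>. (K_count (fst \<omega>), S_tilde \<omega>)) (pair_pmf M (replicate_pmf n st)) =
         map_pmf K_count M \<bind> (\<lambda>k. map_pmf (Pair k) (map_pmf gS (replicate_pmf k st)))"
proof -
  have "pair_pmf M (replicate_pmf n st) = M \<bind> (\<lambda>zs. map_pmf (Pair zs) (replicate_pmf n st))"
    unfolding pair_pmf_def map_pmf_def by simp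
  then have "map_pmf (\<lambda>\<omega>. (K_count (fst \<omega>), S_tilde \<omega>)) (pair_pmf M (replicate_pmf n st)) =
     M \<bind> (\<lambda>zs. map_pmf (\<lambda>ws. (K_count zs, gS ws)) (map_pmf (take (K_count zs)) (replicate_pmf n st)))"
    by (simp add: map_bind_pmf map_pmf_comp o_def S_tilde_eq)
  also have "\<dots> = M \<bind> (\<lambda>zs. map_pmf (\<lambda>ws. (K_count zs, gS ws)) (replicate_pmf (K_count zs) st))"
    by (rule bind_pmf_cong[OF refl]) (simp add: map_take_replicate assms)
  also have "\<dots> = map_pmf K_count M \<bind> (\<lambda>k. map_pmf (Pair k) (map_pmf gS (replicate_pmf k st)))"
    by (simp add: bind_map_pmf map_pmf_comp o_def)
  finally show ?thesis .
qed

lemma cond_expectation: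
  fixes h :: "'a \<Rightarrow> real"
  assumes fin: "finite (set_pmf p)" and ne: "set_pmf p \<inter> s \<noteq> {}"
  shows "measure_pmf.expectation (cond_pmf p s) h =
         measure_pmf.expectation p (\<lambda>x. indicator s x * h x) / measure_pmf.prob p s"
proof -
  have "measure_pmf.expectation (cond_pmf p s) h = (\<Sum>a\<in>set_pmf p. pmf (cond_pmf p s) a * h a)"
    using fin ne by (subst integral_measure_pmf[where A="set_pmf p"]) auto
  also have "\<dots> = (\<Sum>a\<in>set_pmf p. pmf p a * (indicator s a * h a)) / measure_pmf.prob p s"
    unfolding sum_divide_distrib by (rule sum.cong) (auto simp: pmf_cond[OF ne])
  also have "(\<Sum>a\<in>set_pmf p. pmf p a * (indicator s a * h a)) = measure_pmf.expectation p (\<lambda>x. indicator s x * h x)"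
    using fin by (subst integral_measure_pmf[where A="set_pmf p"]) auto
  finally show ?thesis .
qed

lemma expectation_pair_prod:
  fixes u :: "'a \<Rightarrow> real" and v :: "'b \<Rightarrow> real"
  assumes "finite (set_pmf M1)" "finite (set_pmf M2)"
  shows "measure_pmf.expectation (pair_pmf M1 M2) (\<lambda>(i,j). u i * v j) =
         measure_pmf.expectation M1 u * measure_pmf.expectation M2 v"
proof -
  have "measure_pmf.expectation (pair_pmf M1 M2) (\<lambda>(i,j). u i * v j) =
     (\<Sum>z\<in>set_pmf M1 \<times> set_pmf M2. pmf (pair_pmf M1 M2) z * (case z of (i,j) \<Rightarrow> u i * v j))"
    using assms by (subst integral_measure_pmf[where A="set_pmf M1 \<times> set_pmf M2"]) auto
  also have "\<dots> = (\<Sum>i\<in>set_pmf M1. \<Sum>j\<in>set_pmf M2. (pmf M1 i * u i) * (pmf M2 j * v j))"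
    unfolding sum.cartesian_product by (rule sum.cong) (auto simp: pmf_pair)
  also have "\<dots> = (\<Sum>i\<in>set_pmf M1. pmf M1 i * u i) * (\<Sum>j\<in>set_pmf M2. pmf M2 j * v j)"
    by (simp add: sum_product)
  also have "\<dots> = measure_pmf.expectation M1 u * measure_pmf.expectation M2 v"
    using assms by (simp add: integral_measure_pmf[where A="set_pmf M1"] integral_measure_pmf[where A="set_pmf M2"])
  finally show ?thesis .
qed

lemma binom_half_moments:
  "measure_pmf.expectation (binomial_pmf k (1/2)) (\<lambda>j. 2 * real j - real k) = 0 \<and>
   measure_pmf.expectation (binomial_pmf k (1/2)) (\<lambda>j. (2 * real j - real k)^2) = real k"
proof (induction k)
  case 0 then show ?case by (simp add: binomial_pmf_0)
next
  case (Suc k)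
  have hs: "(1/2::real) \<in> {0..1}" by simp
  have E: "measure_pmf.expectation (binomial_pmf (Suc k) (1/2)) g =
     (measure_pmf.expectation (binomial_pmf k (1/2)) (\<lambda>j. g (1 + j)) +
      measure_pmf.expectation (binomial_pmf k (1/2)) g) / 2" for g :: "nat \<Rightarrow> real"
    unfolding binomial_pmf_Suc[OF hs]
    by (subst pmf_expectation_bind[where A=UNIV])
       (auto simp: UNIV_bool map_pmf_def[symmetric] bind_return_pmf' add_divide_distrib)
  have I: "integrable (measure_pmf (binomial_pmf k (1/2))) g" for g :: "nat \<Rightarrow> real"
    by (rule integrable_binomial_pmf) simp
  have 1: "measure_pmf.expectation (binomial_pmf (Suc k) (1/2)) (\<lambda>j. 2 * real j - real (Suc k)) =
      measure_pmf.expectation (binomial_pmf k (1/2)) (\<lambda>j. 2 * real j - real k)"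
  proof -
    have "measure_pmf.expectation (binomial_pmf k (1/2)) (\<lambda>j. 2 * real (1+j) - real (Suc k)) +
          measure_pmf.expectation (binomial_pmf k (1/2)) (\<lambda>j. 2 * real j - real (Suc k)) =
          measure_pmf.expectation (binomial_pmf k (1/2)) (\<lambda>j. (2 * real (1+j) - real (Suc k)) + (2 * real j - real (Suc k)))"
      by (rule Bochner_Integration.integral_add[symmetric]; rule I)
    also have "\<dots> = measure_pmf.expectation (binomial_pmf k (1/2)) (\<lambda>j. 2 * (2 * real j - real k))"
      by (rule Bochner_Integration.integral_cong) auto
    finally show ?thesis unfolding E by simp
  qed
  have 2: "measure_pmf.expectation (binomial_pmf (Suc k) (1/2)) (\<lambda>j. (2 * real j - real (Suc k))^2) =
      measure_pmf.expectation (binomial_pmf k (1/2)) (\<lambda>j. (2 * real j - real k)^2) + 1"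
  proof -
    have "measure_pmf.expectation (binomial_pmf k (1/2)) (\<lambda>j. (2 * real (1+j) - real (Suc k))^2) +
          measure_pmf.expectation (binomial_pmf k (1/2)) (\<lambda>j. (2 * real j - real (Suc k))^2) =
          measure_pmf.expectation (binomial_pmf k (1/2)) (\<lambda>j. (2 * real (1+j) - real (Suc k))^2 + (2 * real j - real (Suc k))^2)"
      by (rule Bochner_Integration.integral_add[symmetric]; rule I)
    also have "\<dots> = measure_pmf.expectation (binomial_pmf k (1/2)) (\<lambda>j. 2 * (2 * real j - real k)^2 + 2)"
      by (rule Bochner_Integration.integral_cong) (auto simp: power2_eq_square algebra_simps)
    also have "\<dots> = 2 * measure_pmf.expectation (binomial_pmf k (1/2)) (\<lambda>j. (2 * real j - real k)^2) + 2"
      by (subst Bochner_Integration.integral_add) (auto intro: I)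
    finally show ?thesis unfolding E by simp
  qed
  show ?case using Suc.IH 1 2 by simp
qed


lemma finite_Dk: "p \<in> {0..1} \<Longrightarrow> finite (set_pmf (map_pmf (psi k) (pair_pmf (binomial_pmf k p) (binomial_pmf k (1/2)))))"
  using finite_set_pmf_binomial_pmf[of p k] by auto

lemma Dk_prod:
  fixes u v :: "int \<Rightarrow> real"
  assumes p: "p \<in> {0..1}"
  shows "measure_pmf.expectation (map_pmf (psi k) (pair_pmf (binomial_pmf k p) (binomial_pmf k (1/2))))
           (\<lambda>s. u (fst s) * v (snd s)) =
         measure_pmf.expectation (binomial_pmf k p) (\<lambda>i. u (2 * int i)) *
         measure_pmf.expectation (binomial_pmf k (1/2)) (\<lambda>j. v (2 * int j - int k))"
proof -
  have "measure_pmf.expectation (map_pmf (psi k) (pair_pmf (binomial_pmf k p) (binomial_pmf k (1/2))))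
           (\<lambda>s. u (fst s) * v (snd s)) =
        measure_pmf.expectation (pair_pmf (binomial_pmf k p) (binomial_pmf k (1/2)))
           (\<lambda>(i,j). u (2 * int i) * v (2 * int j - int k))"
    by (simp add: psi_def) (simp add: case_prod_unfold)
  also have "\<dots> = measure_pmf.expectation (binomial_pmf k p) (\<lambda>i. u (2 * int i)) *
         measure_pmf.expectation (binomial_pmf k (1/2)) (\<lambda>j. v (2 * int j - int k))"
    using p by (intro expectation_pair_prod) auto
  finally show ?thesis .
qed

lemma expectation_delta:
  fixes M :: "'a pmf"
  shows "measure_pmf.expectation M (\<lambda>i. if i = x then 1 else 0 :: real) = pmf M x"
  by (subst integral_measure_pmf[where A="{x}"]) (auto split: if_splits)

lemma bin1_delta:
  assumes "p \<in> {0..1}"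
  shows "measure_pmf.expectation (binomial_pmf k p) (\<lambda>i. if 2 * int i = 2 * int x then 1 else 0 :: real) =
         real (k choose x) * p ^ x * (1 - p) ^ (k - x)"
proof -
  have "(\<lambda>i. if 2 * int i = 2 * int x then 1 else 0 :: real) = (\<lambda>i. if i = x then 1 else 0)"
    by auto
  then show ?thesis using assms by (simp add: expectation_delta)
qed

lemma bin2_delta:
  "measure_pmf.expectation (binomial_pmf k (1/2)) (\<lambda>j. if 2 * int j - int k = y then 1 else 0 :: real) =
   gbinom k ((real k + real_of_int y) / 2) / 2 ^ k"
proof (cases "\<exists>j. 2 * int j - int k = y")
  case True
  then obtain j where j: "2 * int j - int k = y" by blast
  have "(\<lambda>i. if 2 * int i - int k = y then 1 else 0 :: real) = (\<lambda>i. if i = j then 1 else 0)"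
    using j by (auto simp: fun_eq_iff)
  then have "measure_pmf.expectation (binomial_pmf k (1/2)) (\<lambda>j. if 2 * int j - int k = y then 1 else 0 :: real)
      = real (k choose j) * (1/2) ^ j * (1/2) ^ (k - j)"
    by (simp add: expectation_delta)
  moreover have rj: "(real k + real_of_int y) / 2 = real j"
    using j by (simp add: field_simps)
  moreover have "real (k choose j) * (1/2) ^ j * (1/2) ^ (k - j) = gbinom k (real j) / 2 ^ k"
  proof (cases "j \<le> k")
    case True
    have "(1/2::real) ^ j * (1/2) ^ (k - j) = (1/2) ^ k"
      using True by (simp add: power_add[symmetric])
    then show ?thesis using True by (simp add: gbinom_def power_divide)
  next
    case False
    then show ?thesis by (simp add: gbinom_def)
  qed
  ultimately show ?thesis by simp
next
  case False
  then have "(\<lambda>i. if 2 * int i - int k = y then 1 else 0 :: real) = (\<lambda>i. 0)" by auto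
  moreover have "gbinom k ((real k + real_of_int y) / 2) = 0"
  proof (rule ccontr)
    assume "gbinom k ((real k + real_of_int y) / 2) \<noteq> 0"
    then have in_: "(real k + real_of_int y) / 2 \<in> \<int>" and nn: "0 \<le> (real k + real_of_int y) / 2"
      unfolding gbinom_def by (auto split: if_splits)
    then obtain m :: int where m: "(real k + real_of_int y) / 2 = real_of_int m" by (auto elim: Ints_cases)
    then have "0 \<le> m" using nn by simp
    have "2 * m - int k = y" using m by (simp add: field_simps)
    then have "2 * int (nat m) - int k = y" using \<open>0 \<le> m\<close> by simp
    then show False using False by blast
  qed
  ultimately show ?thesis by simp
qed


lemma sum_from_x:
  fixes g :: "nat \<Rightarrow> real"
  assumes "\<And>k. k < x \<Longrightarrow> g k = 0"
  shows "(\<Sum>k\<in>{0..n}. g k) = (\<Sum>k=x..n. g k)"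
  by (rule sum.mono_neutral_right) (auto intro: assms)

lemma termA:
  fixes \<alpha> \<beta> g :: real
  shows "real (k choose x) * ((2*\<alpha>) ^ x * (2*\<beta>) ^ (k - x)) * (g / 2 ^ k) =
         real (k choose x) * g * \<alpha> ^ x * \<beta> ^ (k - x)"
proof (cases "x \<le> k")
  case True
  have e: "(2::real) ^ x * 2 ^ (k - x) = 2 ^ k" using True by (simp add: power_add[symmetric])
  have "(2*\<alpha>) ^ x * (2*\<beta>) ^ (k - x) = ((2::real) ^ x * 2 ^ (k - x)) * (\<alpha> ^ x * \<beta> ^ (k - x))"
    by (simp add: power_mult_distrib mult_ac)
  also have "\<dots> = 2 ^ k * (\<alpha> ^ x * \<beta> ^ (k - x))" by (simp only: e)
  finally have h: "(2*\<alpha>) ^ x * (2*\<beta>) ^ (k - x) = 2 ^ k * (\<alpha> ^ x * \<beta> ^ (k - x))" .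
  show ?thesis unfolding h by (simp add: field_simps)
next
  case False then show ?thesis by (simp add: binomial_eq_0)
qed

theorem proposition4:
  fixes a b lamF lamA \<alpha> \<beta> :: real and step :: "(int \<times> int) pmf"
    and n x :: nat and y :: int
  assumes "0 \<le> a" "a \<le> 1" "0 \<le> b" "b \<le> 1"
    and "0 \<le> lamF" "0 \<le> lamA" "lamF + lamA = 1"
    and "0 \<le> \<alpha>" "0 \<le> \<beta>" "\<alpha> + \<beta> = 1/2"
    and "pmf step (1, 1) = \<alpha>" "pmf step (1, -1) = \<alpha>"
    and "pmf step (-1, 1) = \<beta>" "pmf step (-1, -1) = \<beta>"
    and "n \<ge> 1" "x \<le> n" "- int n \<le> y" "y \<le> int n"
  defines "f \<equiv> (\<lambda>k. measure_pmf.prob (mc_path lamF a b n) {zs. K_count zs = k})"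
    and "P \<equiv> joint lamF a b step n"
  shows "measure_pmf.prob P {\<omega>. S_tilde \<omega> = (2 * int x, y)} =
           (\<Sum>k=x..n. f k * real (k choose x) * gbinom k ((real k + real_of_int y) / 2)
                       * \<alpha> ^ x * \<beta> ^ (k - x))
     \<and> (measure_pmf.prob P {\<omega>. fst (S_tilde \<omega>) = 2 * int x} > 0 \<longrightarrow>
         measure_pmf.variance (cond_pmf P {\<omega>. fst (S_tilde \<omega>) = 2 * int x})
             (\<lambda>\<omega>. real_of_int (snd (S_tilde \<omega>))) =
           (\<Sum>k=x..n. real k * f k * real (k choose x) * (2*\<alpha>) ^ x * (2*\<beta>) ^ (k - x)) /
           (\<Sum>k=x..n. f k * real (k choose x) * (2*\<alpha>) ^ x * (2*\<beta>) ^ (k - x)))"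
proof -
  let ?M = "mc_path lamF a b n"
  have a2: "2*\<alpha> \<in> {0..1}" using assms by auto
  have b2: "1 - 2*\<alpha> = 2*\<beta>" using assms by simp
  have stepE: "step = map_pmf phi (pair_pmf (bernoulli_pmf (2*\<alpha>)) (bernoulli_pmf (1/2)))"
    using assms by (intro step_eq) auto
  define Dk where "Dk k = map_pmf (psi k) (pair_pmf (binomial_pmf k (2*\<alpha>)) (binomial_pmf k (1/2)))" for k
  have Drep: "map_pmf gS (replicate_pmf k step) = Dk k" for k
    unfolding Dk_def stepE using a2 by (intro D_eq) auto
  have finD: "finite (set_pmf (Dk k))" for k
    unfolding Dk_def using finite_Dk[OF a2] by blast
  define \<rho> where "\<rho> = (\<lambda>\<omega>::state list \<times> (int \<times> int) list. (K_count (fst \<omega>), S_tilde \<omega>))"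
  define R where "R = map_pmf \<rho> P"
  have Kle: "K_count zs \<le> n" if "zs \<in> set_pmf ?M" for zs
    using that set_mc_path[of lamF a b n] K_count_le[of zs] by auto
  have Req: "R = map_pmf K_count ?M \<bind> (\<lambda>k. map_pmf (Pair k) (Dk k))"
    unfolding R_def \<rho>_def P_def joint_def using R_eq[of ?M n step, OF Kle] Drep by simp
  have setKd: "set_pmf (map_pmf K_count ?M) \<subseteq> {0..n}" using Kle by auto
  have pmfKd: "pmf (map_pmf K_count ?M) k = f k" for k
    by (simp add: pmf_map f_def vimage_def)
  have ExpR: "measure_pmf.expectation R h =
      (\<Sum>k\<in>{0..n}. f k * measure_pmf.expectation (Dk k) (\<lambda>s. h (k, s)))" for h :: "nat \<times> int \<times> int \<Rightarrow> real"
    unfolding Req using setKd finD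
    by (subst pmf_expectation_bind[where A="{0..n}"]) (auto simp: pmfKd)
  have finR: "finite (set_pmf R)"
  proof -
    have "set_pmf R \<subseteq> (\<Union>k\<in>{0..n}. Pair k ` set_pmf (Dk k))"
    proof
      fix z assume "z \<in> set_pmf R"
      then obtain zs where zs: "zs \<in> set_pmf ?M" "z \<in> Pair (K_count zs) ` set_pmf (Dk (K_count zs))"
        unfolding Req by auto
      moreover have "K_count zs \<in> {0..n}" using Kle[OF zs(1)] by simp
      ultimately show "z \<in> (\<Union>k\<in>{0..n}. Pair k ` set_pmf (Dk k))" by blast
    qed
    moreover have "finite (\<Union>k\<in>{0..n}. Pair k ` set_pmf (Dk k))" using finD by auto
    ultimately show ?thesis by (rule finite_subset)
  qed
  have probE: "measure_pmf.prob R X = measure_pmf.expectation R (indicator X)" for X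
    by (simp add: measure_pmf.emeasure_eq_measure)
  define c where "c k = real (k choose x) * ((2*\<alpha>) ^ x * (2*\<beta>) ^ (k - x))" for k
  have cA: "c k * (g / 2 ^ k) = real (k choose x) * g * \<alpha> ^ x * \<beta> ^ (k - x)" for k g
    unfolding c_def by (rule termA)
  have c0: "c k = 0" if "k < x" for k using that by (simp add: c_def binomial_eq_0)
  have mom1: "measure_pmf.expectation (binomial_pmf k (1/2)) (\<lambda>j. real_of_int (2 * int j - int k)) = 0" for k
    using binom_half_moments[of k] by simp
  have mom2: "measure_pmf.expectation (binomial_pmf k (1/2)) (\<lambda>j. (real_of_int (2 * int j - int k))^2) = real k" for k
    using binom_half_moments[of k] by simp
  have DA: "measure_pmf.expectation (Dk k) (\<lambda>s. indicator {z. snd z = (2 * int x, y)} (k, s)) =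
      c k * (gbinom k ((real k + real_of_int y) / 2) / 2 ^ k)" for k
  proof -
    have "(\<lambda>s. indicator {z. snd z = (2 * int x, y)} (k, s) :: real) =
          (\<lambda>s. (\<lambda>a. if a = 2 * int x then 1 else 0) (fst s) * (\<lambda>b. if b = y then 1 else 0) (snd s))"
      by (auto simp: fun_eq_iff indicator_def)
    then show ?thesis unfolding Dk_def c_def
      by (simp only: Dk_prod[OF a2, where u="\<lambda>a. if a = 2 * int x then 1 else 0" and v="\<lambda>b. if b = y then 1 else 0"] bin1_delta[OF a2] bin2_delta b2)
  qed
  have DD: "measure_pmf.expectation (Dk k) (\<lambda>s. indicator {z. fst (snd z) = 2 * int x} (k, s)) = c k" for k
  proof -
    have "(\<lambda>s. indicator {z. fst (snd z) = 2 * int x} (k, s) :: real) =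
          (\<lambda>s. (\<lambda>a. if a = 2 * int x then 1 else 0) (fst s) * (\<lambda>b. 1) (snd s))"
      by (auto simp: fun_eq_iff indicator_def)
    then have "measure_pmf.expectation (Dk k) (\<lambda>s. indicator {z. fst (snd z) = 2 * int x} (k, s)) =
       measure_pmf.expectation (Dk k) (\<lambda>s. (\<lambda>a. if a = 2 * int x then 1 else 0) (fst s) * (\<lambda>b. 1::real) (snd s))"
      by (rule arg_cong)
    also have "\<dots> = c k" unfolding Dk_def c_def
      by (subst Dk_prod[OF a2]) (simp only: bin1_delta[OF a2] b2, simp)
    finally show ?thesis .
  qed
  have D1: "measure_pmf.expectation (Dk k) (\<lambda>s. indicator {z. fst (snd z) = 2 * int x} (k, s) * real_of_int (snd (snd (k, s)))) = 0" for k
  proof -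
    have "(\<lambda>s. indicator {z. fst (snd z) = 2 * int x} (k, s) * real_of_int (snd (snd (k, s)))) =
          (\<lambda>s. (\<lambda>a. if a = 2 * int x then 1 else 0) (fst s) * (\<lambda>b. real_of_int b) (snd s))"
      by (auto simp: fun_eq_iff indicator_def)
    then show ?thesis unfolding Dk_def
      by (simp only: Dk_prod[OF a2, where u="\<lambda>a. if a = 2 * int x then 1 else 0" and v="\<lambda>b. real_of_int b"] mom1 mult_zero_right)
  qed
  have D2: "measure_pmf.expectation (Dk k) (\<lambda>s. indicator {z. fst (snd z) = 2 * int x} (k, s) * (real_of_int (snd (snd (k, s))))^2) = c k * real k" for k
  proof -
    have "(\<lambda>s. indicator {z. fst (snd z) = 2 * int x} (k, s) * (real_of_int (snd (snd (k, s))))^2) =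
          (\<lambda>s. (\<lambda>a. if a = 2 * int x then 1 else 0) (fst s) * (\<lambda>b. (real_of_int b)^2) (snd s))"
      by (auto simp: fun_eq_iff indicator_def)
    then show ?thesis unfolding Dk_def c_def
      by (simp only: Dk_prod[OF a2, where u="\<lambda>a. if a = 2 * int x then 1 else 0" and v="\<lambda>b. (real_of_int b)^2"] mom2 bin1_delta[OF a2] b2)
  qed
  have P1: "measure_pmf.prob P {\<omega>. S_tilde \<omega> = (2 * int x, y)} =
           (\<Sum>k=x..n. f k * real (k choose x) * gbinom k ((real k + real_of_int y) / 2)
                       * \<alpha> ^ x * \<beta> ^ (k - x))"
  proof -
    have "measure_pmf.prob P {\<omega>. S_tilde \<omega> = (2 * int x, y)} = measure_pmf.prob R {z. snd z = (2 * int x, y)}"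
      unfolding R_def by (simp add: \<rho>_def vimage_def)
    also have "\<dots> = (\<Sum>k\<in>{0..n}. f k * (c k * (gbinom k ((real k + real_of_int y) / 2) / 2 ^ k)))"
      unfolding probE ExpR DA ..
    also have "\<dots> = (\<Sum>k=x..n. f k * (c k * (gbinom k ((real k + real_of_int y) / 2) / 2 ^ k)))"
      by (rule sum_from_x) (simp add: c0)
    also have "\<dots> = (\<Sum>k=x..n. f k * real (k choose x) * gbinom k ((real k + real_of_int y) / 2)
                       * \<alpha> ^ x * \<beta> ^ (k - x))"
      apply (rule sum.cong[OF refl]) apply (subst cA) apply (simp add: mult_ac) done
    finally show ?thesis .
  qed
  define E' where "E' = {z :: nat \<times> int \<times> int. fst (snd z) = 2 * int x}"
  have EE: "{\<omega>. fst (S_tilde \<omega>) = 2 * int x} = \<rho> -` E'"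
    unfolding E'_def \<rho>_def by auto
  have probPE: "measure_pmf.prob P {\<omega>. fst (S_tilde \<omega>) = 2 * int x} = (\<Sum>k=x..n. f k * c k)"
  proof -
    have "measure_pmf.prob P {\<omega>. fst (S_tilde \<omega>) = 2 * int x} = measure_pmf.prob R E'"
      unfolding R_def EE by simp
    also have "\<dots> = (\<Sum>k\<in>{0..n}. f k * c k)"
      unfolding probE ExpR E'_def DD ..
    also have "\<dots> = (\<Sum>k=x..n. f k * c k)"
      by (rule sum_from_x) (simp add: c0)
    finally show ?thesis .
  qed
  have P2: "measure_pmf.variance (cond_pmf P {\<omega>. fst (S_tilde \<omega>) = 2 * int x})
             (\<lambda>\<omega>. real_of_int (snd (S_tilde \<omega>))) =
           (\<Sum>k=x..n. real k * f k * real (k choose x) * (2*\<alpha>) ^ x * (2*\<beta>) ^ (k - x)) /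
           (\<Sum>k=x..n. f k * real (k choose x) * (2*\<alpha>) ^ x * (2*\<beta>) ^ (k - x))"
    if pos: "measure_pmf.prob P {\<omega>. fst (S_tilde \<omega>) = 2 * int x} > 0"
  proof -
    let ?Y = "\<lambda>z::nat \<times> int \<times> int. real_of_int (snd (snd z))"
    have ne: "set_pmf P \<inter> \<rho> -` E' \<noteq> {}"
      using pos unfolding EE by (auto simp: measure_pmf_zero_iff[symmetric])
    have neR: "set_pmf R \<inter> E' \<noteq> {}" using ne unfolding R_def by auto
    have cm: "cond_pmf R E' = map_pmf \<rho> (cond_pmf P (\<rho> -` E'))"
      unfolding R_def by (rule cond_map_pmf[OF ne])
    have pR: "measure_pmf.prob R E' = (\<Sum>k=x..n. f k * c k)"
      using probPE unfolding R_def EE by simp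
    have V: "measure_pmf.variance (cond_pmf P {\<omega>. fst (S_tilde \<omega>) = 2 * int x})
             (\<lambda>\<omega>. real_of_int (snd (S_tilde \<omega>))) = measure_pmf.variance (cond_pmf R E') ?Y"
      unfolding cm EE by (simp add: \<rho>_def)
    have m: "measure_pmf.expectation (cond_pmf R E') ?Y = 0"
    proof -
      have "measure_pmf.expectation R (\<lambda>z. indicator E' z * ?Y z) = 0"
        unfolding ExpR E'_def D1 by simp
      then show ?thesis by (simp add: cond_expectation[OF finR neR])
    qed
    have "measure_pmf.variance (cond_pmf R E') ?Y = measure_pmf.expectation (cond_pmf R E') (\<lambda>z. (?Y z)^2)"
      by (simp add: m)
    also have "\<dots> = measure_pmf.expectation R (\<lambda>z. indicator E' z * (?Y z)^2) / measure_pmf.prob R E'"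
      by (rule cond_expectation[OF finR neR])
    also have "measure_pmf.expectation R (\<lambda>z. indicator E' z * (?Y z)^2) = (\<Sum>k\<in>{0..n}. f k * (c k * real k))"
      unfolding ExpR E'_def D2 ..
    also have "\<dots> = (\<Sum>k=x..n. f k * (c k * real k))"
      by (rule sum_from_x) (simp add: c0)
    finally show ?thesis unfolding V pR
      by (simp add: c_def mult_ac)
  qed
  show ?thesis using P1 P2 by blast
qed

end
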